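(* Let $d\ge3$ and $\beta>\beta^*(d)=\log\left(\frac{\sqrt{d-1}+1}{\sqrt{d-1}-1}\right)$. Then there exists $\varepsilon>0$ such that \[\mathcal{B}_{\mathrm{Ising}}(\pi^*_\varepsilon,\beta,d)>\log2+\frac d2\log\frac{1+e^{-\beta}}{2},\] where $\pi^*_\varepsilon=\frac12(\delta_{2\varepsilon}+\delta_{-2\varepsilon})$.
   Context: For a probability measure $\pi$ on $[-1,1]$ let $(\mu_{\pi,i})_{i\ge1}$ be independent samples from $\pi$, let $\Lambda(x)=x\log x$, and define the Bethe free energy \[\mathcal{B}_{\mathrm{Ising}}(\pi,\beta,d)=\mathbb{E}\left[\frac{\Lambda\left(\sum_{\sigma\in\{\pm1\}}\prod_{i=1}^d\left(1-(1-e^{-\beta})\frac{1+\sigma\mu_{\pi,i}}{2}\right)\right)}{2^{1-d}(1+e^{-\beta})^d}-\frac{d\,\Lambda\left(1-(1-e^{-\beta})\frac{1+\mu_{\pi,1}\mu_{\pi,2}}{2}\right)}{1+e^{-\beta}}\right].\] $\delta_x$ is the point mass at $x$. *)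

theory Defs
  imports "HOL-Probability.Probability"
begin

definition Lambda :: "real \<Rightarrow> real" where
  "Lambda x = x * ln x"

text \<open>Bethe free energy of the Ising model. The i.i.d. samples
  mu_1, mu_2, ... from pi are modelled by the product measure on
  coordinates 0, ..., max d 2 - 1 (only these coordinates occur).\<close>
definition B_Ising :: "real measure \<Rightarrow> real \<Rightarrow> nat \<Rightarrow> real" where
  "B_Ising P \<beta> d =
     (\<integral> mu. (Lambda (\<Sum>\<sigma>\<in>{-1, 1::real}. \<Prod>i<d. (1 - (1 - exp (-\<beta>)) * (1 + \<sigma> * mu i) / 2))
                / (2 powr (1 - real d) * (1 + exp (-\<beta>)) ^ d)
            - real d * Lambda (1 - (1 - exp (-\<beta>)) * (1 + mu 0 * mu 1) / 2) / (1 + exp (-\<beta>)))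
      \<partial>(PiM {..<max d 2} (\<lambda>_. P)))"

definition beta_star :: "nat \<Rightarrow> real" where
  "beta_star d = ln ((sqrt (real d - 1) + 1) / (sqrt (real d - 1) - 1))"

definition pi_star :: "real \<Rightarrow> real measure" where
  "pi_star \<epsilon> = measure_pmf (pmf_of_set {2 * \<epsilon>, - 2 * \<epsilon>})"

end

theory Submission
  imports Defs
begin

lemma sign_deriv_nonneg:
  fixes f f' :: "real \<Rightarrow> real"
  assumes "a < 0" "0 < b" "f 0 = 0"
    and D: "\<And>x. a < x \<Longrightarrow> x < b \<Longrightarrow> (f has_real_derivative f' x) (at x)"
    and S: "\<And>x. a < x \<Longrightarrow> x < b \<Longrightarrow> 0 \<le> x * f' x"
    and x: "a < x" "x < b"
  shows "0 \<le> f x"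
proof (cases "0 < x")
  case True
  have "\<And>z. 0 \<le> z \<Longrightarrow> z \<le> x \<Longrightarrow> (f has_real_derivative f' z) (at z)"
    using D assms by auto
  from MVT2[OF True this] obtain z where z: "0 < z" "z < x" "f x - f 0 = (x - 0) * f' z" by blast
  have "0 \<le> z * f' z" using S z assms by auto
  then have "0 \<le> f' z" using z by (simp add: zero_le_mult_iff)
  then show ?thesis using z assms True by simp
next
  case False
  show ?thesis
  proof (cases "x = 0")
    case True then show ?thesis using assms by simp
  next
    case False
    then have xn: "x < 0" using \<open>\<not> 0 < x\<close> by simp
    have "\<And>z. x \<le> z \<Longrightarrow> z \<le> 0 \<Longrightarrow> (f has_real_derivative f' z) (at z)"
      using D assms by auto
    from MVT2[OF xn this] obtain z where z: "x < z" "z < 0" "f 0 - f x = (0 - x) * f' z" by blast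
    have "0 \<le> z * f' z" using S z assms by auto
    then have "f' z \<le> 0" using z by (simp add: zero_le_mult_iff)
    then have "0 \<le> x * f' z" using xn by (intro mult_nonpos_nonpos) auto
    then have "(0 - x) * f' z \<le> 0" by simp
    then show ?thesis using z assms by simp
  qed
qed

lemma ln_upper3:
  fixes w :: real assumes "-1 < w"
  shows "ln (1 + w) \<le> w - w^2/2 + w^3/3"
proof -
  define f where "f = (\<lambda>x::real. x - x^2/2 + x^3/3 - ln (1 + x))"
  have "0 \<le> f w"
  proof (rule sign_deriv_nonneg[where f=f and x=w and a="-1" and b="\<bar>w\<bar> + 1" and f' = "\<lambda>x. x^3/(1+x)"])
    fix x :: real assume x: "-1 < x" "x < \<bar>w\<bar> + 1"
    show "(f has_real_derivative x^3/(1+x)) (at x)"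
      unfolding f_def using x
      by (auto intro!: derivative_eq_intros simp: field_simps power2_eq_square power3_eq_cube)
    have "0 \<le> x^4/(1+x)" using x by simp
    then show "0 \<le> x * (x^3/(1+x))"
      by (simp add: power3_eq_cube power4_eq_xxxx mult.assoc)
  qed (use assms in \<open>auto simp: f_def\<close>)
  then show ?thesis by (simp add: f_def)
qed

lemma ln_lower4:
  fixes w :: real assumes "-1/2 < w"
  shows "w - w^2/2 + w^3/3 - w^4/2 \<le> ln (1 + w)"
proof -
  define f where "f = (\<lambda>x::real. ln (1 + x) - (x - x^2/2 + x^3/3 - x^4/2))"
  have "0 \<le> f w"
  proof (rule sign_deriv_nonneg[where f=f and x=w and a="-1/2" and b="\<bar>w\<bar> + 1" and f' = "\<lambda>x. x^3*(1+2*x)/(1+x)"])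
    fix x :: real assume x: "-1/2 < x" "x < \<bar>w\<bar> + 1"
    show "(f has_real_derivative x^3*(1+2*x)/(1+x)) (at x)"
      unfolding f_def using x
      by (auto intro!: derivative_eq_intros simp: field_simps power2_eq_square power3_eq_cube)
    have "0 \<le> x^4 * (1+2*x)/(1+x)" using x by simp
    then show "0 \<le> x * (x^3*(1+2*x)/(1+x))"
      by (simp add: power3_eq_cube power4_eq_xxxx mult.assoc)
  qed (use assms in \<open>auto simp: f_def\<close>)
  then show ?thesis by (simp add: f_def)
qed

lemma abs_pow_facts:
  fixes w :: real
  shows "w^3 \<le> (abs w)^3" "-(w^3) \<le> (abs w)^3" "w^4 = (abs w)^3 * (abs w)"
    "w^5 \<le> (abs w)^3 * (abs w)^2" "(abs w)^3 = (abs w) * w^2"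
proof -
  show "w^3 \<le> (abs w)^3" using abs_ge_self[of "w^3"] by (simp add: power_abs)
  show "-(w^3) \<le> (abs w)^3" using abs_ge_minus_self[of "w^3"] by (simp add: power_abs)
  have "w^4 = (abs w)^4" by simp
  then show "w^4 = (abs w)^3 * (abs w)" by (simp add: power4_eq_xxxx power3_eq_cube)
  have "w^5 \<le> (abs w)^5" using abs_ge_self[of "w^5"] by (simp add: power_abs)
  moreover have "(abs w)^(3+2) = (abs w)^3 * (abs w)^2" by (rule power_add)
  ultimately show "w^5 \<le> (abs w)^3 * (abs w)^2" by simp
  have "w^2 = (abs w)^2" by simp
  then show "(abs w)^3 = (abs w) * w^2" by (simp add: power2_eq_square power3_eq_cube)
qed

lemma xlnx_lower:
  fixes w :: real assumes "\<bar>w\<bar> \<le> 1/4"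
  shows "w + w^2/2 - \<bar>w\<bar>^3 \<le> (1 + w) * ln (1 + w)"
proof -
  have w: "-1/2 < w" using assms by auto
  have "(1 + w) * (w - w^2/2 + w^3/3 - w^4/2) \<le> (1 + w) * ln (1 + w)"
    using ln_lower4[OF w] w by (intro mult_left_mono) auto
  moreover have "(1 + w) * (w - w^2/2 + w^3/3 - w^4/2) = w + w^2/2 - w^3/6 - w^4/6 - w^5/2"
    by (simp add: field_simps power2_eq_square power3_eq_cube power4_eq_xxxx power_numeral_reduce)
  moreover have "w^3/6 + w^4/6 + w^5/2 \<le> \<bar>w\<bar>^3"
  proof -
    have a2: "\<bar>w\<bar>^2 \<le> 1/16" using assms power_mono[of "\<bar>w\<bar>" "1/4" 2] by (simp add: power2_eq_square)
    have "\<bar>w\<bar>^3 * \<bar>w\<bar> \<le> \<bar>w\<bar>^3 * (1/4)" using assms by (intro mult_left_mono) auto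
    moreover have "\<bar>w\<bar>^3 * \<bar>w\<bar>^2 \<le> \<bar>w\<bar>^3 * (1/16)" using a2 by (intro mult_left_mono) auto
    ultimately show ?thesis using abs_pow_facts[of w] by linarith
  qed
  ultimately show ?thesis by linarith
qed

lemma xlnx_upper:
  fixes w :: real assumes "\<bar>w\<bar> \<le> 1/4"
  shows "(1 + w) * ln (1 + w) \<le> w + w^2/2 + \<bar>w\<bar>^3"
proof -
  have w: "-1 < w" using assms by auto
  have "(1 + w) * ln (1 + w) \<le> (1 + w) * (w - w^2/2 + w^3/3)"
    using ln_upper3[OF w] w by (intro mult_left_mono) auto
  moreover have "(1 + w) * (w - w^2/2 + w^3/3) = w + w^2/2 - w^3/6 + w^4/3"
    by (simp add: field_simps power2_eq_square power3_eq_cube power4_eq_xxxx)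
  moreover have "-(w^3)/6 + w^4/3 \<le> \<bar>w\<bar>^3"
  proof -
    have "\<bar>w\<bar>^3 * \<bar>w\<bar> \<le> \<bar>w\<bar>^3 * (1/4)" using assms by (intro mult_left_mono) auto
    then show ?thesis using abs_pow_facts[of w] by linarith
  qed
  ultimately show ?thesis by linarith
qed

lemma pow_upper:
  fixes y :: real assumes "0 \<le> y" "real n * y \<le> 1/2"
  shows "(1 + y)^n \<le> 1 + 2 * real n * y"
  using assms(2)
proof (induction n)
  case 0 then show ?case by simp
next
  case (Suc n)
  have h: "real n * y \<le> 1/2" using Suc.prems assms(1) by (simp add: algebra_simps) 
  have "(1 + y)^(Suc n) = (1+y)^n * (1+y)" by simp
  also have "\<dots> \<le> (1 + 2 * real n * y) * (1 + y)"
    using Suc.IH[OF h] assms(1) by (intro mult_right_mono) auto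
  also have "\<dots> = 1 + (2 * real n + 1) * y + 2 * (real n * y) * y" by (simp add: algebra_simps)
  also have "\<dots> \<le> 1 + (2 * real n + 1) * y + 1 * y"
    using h assms(1) by (intro add_left_mono mult_right_mono) auto
  also have "\<dots> = 1 + 2 * real (Suc n) * y" by (simp add: algebra_simps)
  finally show ?case .
qed

lemma pow_even_lower:
  fixes u :: real assumes "0 \<le> u"
  shows "((1+u)^n + (1-u)^n)/2 \<ge> 1 + real n * (real n - 1)/2 * u^2
       \<and> ((1+u)^n - (1-u)^n)/2 \<ge> real n * u"
proof (induction n)
  case 0 then show ?case by simp
next
  case (Suc n)
  define f where "f = ((1+u)^n + (1-u)^n)/2"
  define g where "g = ((1+u)^n - (1-u)^n)/2"
  have f1: "((1+u)^Suc n + (1-u)^Suc n)/2 = f + u * g" unfolding f_def g_def by (simp add: field_simps)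
  have g1: "((1+u)^Suc n - (1-u)^Suc n)/2 = g + u * f" unfolding f_def g_def by (simp add: field_simps)
  have IH1: "f \<ge> 1 + real n * (real n - 1)/2 * u^2" and IH2: "g \<ge> real n * u"
    using Suc.IH unfolding f_def g_def by auto
  have "real n * (real n - 1)/2 * u^2 \<ge> 0" using assms
    by (cases n) (auto simp: algebra_simps)
  then have "f \<ge> 1" using IH1 by linarith
  have "u * g \<ge> u * (real n * u)" using IH2 assms by (intro mult_left_mono) auto
  moreover have "real (Suc n) * (real (Suc n) - 1)/2 * u^2 = real n * (real n - 1)/2 * u^2 + u * (real n * u)"
    by (simp add: field_simps power2_eq_square)
  ultimately have A: "f + u * g \<ge> 1 + real (Suc n) * (real (Suc n) - 1)/2 * u^2"
    using IH1 by linarith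
  have "u * f \<ge> u * 1" using \<open>f \<ge> 1\<close> assms by (intro mult_left_mono) auto
  then have B: "g + u * f \<ge> real (Suc n) * u" using IH2 by (simp add: algebra_simps)
  show ?case using A B f1 g1 by simp
qed

lemma sum_prod_T:
  fixes X :: real and f :: "real \<Rightarrow> real"
  assumes "X \<noteq> 0"
  shows "(\<Sum>t\<in>PiE {..<n} (\<lambda>_. {X,-X}). \<Prod>i<n. f (t i)) = (f X + f (-X))^n"
proof -
  have "(\<Prod>i<n. \<Sum>a\<in>{X,-X}. f a) = (\<Sum>t\<in>PiE {..<n} (\<lambda>_. {X,-X}). \<Prod>i<n. f (t i))"
    by (rule prod_sum_PiE) auto
  moreover have "(\<Sum>a\<in>{X,-X}. f a) = f X + f (-X)" using assms by simp
  ultimately show ?thesis by simp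
qed

lemma sum_m_zero:
  fixes X :: real and n :: nat
  assumes "X \<noteq> 0" "2 \<le> n"
  shows "(\<Sum>t\<in>PiE {..<n} (\<lambda>_. {X,-X}). t 0 * t 1) = 0"
proof -
  define h where "h = (\<lambda>i::nat. \<lambda>a::real. if i < 2 then a else 1)"
  have split: "{..<n} = {0,1} \<union> {2..<n}" using assms by auto
  have eq: "(\<Prod>i<n. h i (t i)) = t 0 * t 1" for t
  proof -
    have "(\<Prod>i<n. h i (t i)) = (\<Prod>i\<in>{0,1}. h i (t i)) * (\<Prod>i\<in>{2..<n}. h i (t i))"
      unfolding split by (rule prod.union_disjoint) auto
    also have "(\<Prod>i\<in>{2..<n}. h i (t i)) = 1" by (intro prod.neutral) (auto simp: h_def)
    finally show ?thesis by (simp add: h_def)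
  qed
  have "(\<Prod>i<n. \<Sum>a\<in>{X,-X}. h i a) = (\<Sum>t\<in>PiE {..<n} (\<lambda>_. {X,-X}). \<Prod>i<n. h i (t i))"
    by (rule prod_sum_PiE) auto
  moreover have "(\<Prod>i<n. \<Sum>a\<in>{X,-X}. h i a) = 0"
    using assms by (intro prod_zero bexI[of _ 0]) (auto simp: h_def)
  ultimately show ?thesis using eq by simp
qed

lemma card_T:
  fixes X :: real assumes "X \<noteq> 0"
  shows "card (PiE {..<n} (\<lambda>_. {X,-X})) = 2^n"
  using assms by (auto simp: card_PiE numeral_2_eq_2)

lemma pointwise_identity:
  fixes q \<tau> c :: real and d :: nat and t :: "nat \<Rightarrow> real"
  assumes q: "0 < q" "q < 1" and tau: "\<tau> = (1-q)/(1+q)" and c: "c = (1+q)/2"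
    and pos: "\<And>i. i < d \<Longrightarrow> \<bar>\<tau> * t i\<bar> < 1"
    and v0: "\<bar>\<tau> * (t 0 * t 1)\<bar> < 1"
  defines "w \<equiv> ((\<Prod>i<d. (1 + \<tau> * t i)) + (\<Prod>i<d. (1 - \<tau> * t i)))/2 - 1"
    and "v \<equiv> - (\<tau> * (t 0 * t 1))"
  shows "Lambda (\<Sum>\<sigma>\<in>{-1, 1::real}. \<Prod>i<d. (1 - (1 - q) * (1 + \<sigma> * t i) / 2))
                / (2 powr (1 - real d) * (1 + q) ^ d)
            - real d * Lambda (1 - (1 - q) * (1 + t 0 * t 1) / 2) / (1 + q)
       = (1 + w) * (real d * ln c + ln 2) + (1 + w) * ln (1 + w)
         - real d / 2 * (1 + v) * ln c - real d / 2 * ((1 + v) * ln (1 + v))"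
proof -
  define Pp where "Pp = (\<Prod>i<d. (1 + \<tau> * t i))"
  define Pm where "Pm = (\<Prod>i<d. (1 - \<tau> * t i))"
  have cpos: "0 < c" using q c by simp
  have fac: "1 - (1-q)*(1+\<sigma>*a)/2 = c*(1 - \<sigma>*\<tau>*a)" for \<sigma> a
    unfolding tau c using q by (simp add: field_simps)
  have "(\<Sum>\<sigma>\<in>{-1, 1::real}. \<Prod>i<d. (1 - (1 - q) * (1 + \<sigma> * t i) / 2))
      = (\<Prod>i<d. c * (1 + \<tau> * t i)) + (\<Prod>i<d. c * (1 - \<tau> * t i))"
    by (simp add: fac)
  also have "\<dots> = c^d * (Pp + Pm)"
  proof -
    have "(\<Prod>i<d. c * (1 + \<tau> * t i)) = c^d * Pp" by (simp add: Pp_def prod.distrib)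
    moreover have "(\<Prod>i<d. c * (1 - \<tau> * t i)) = c^d * Pm" by (simp add: Pm_def prod.distrib)
    ultimately show ?thesis by (simp add: algebra_simps)
  qed
  finally have S: "(\<Sum>\<sigma>\<in>{-1, 1::real}. \<Prod>i<d. (1 - (1 - q) * (1 + \<sigma> * t i) / 2)) = c^d * (Pp + Pm)" .
  have Pp: "0 < Pp" unfolding Pp_def
    by (intro prod_pos) (use pos in \<open>fastforce simp: abs_less_iff\<close>)
  have Pm: "0 < Pm" unfolding Pm_def
    by (intro prod_pos) (use pos in \<open>fastforce simp: abs_less_iff\<close>)
  have wdef: "Pp + Pm = 2 * (1 + w)" unfolding w_def Pp_def Pm_def by simp
  have w1: "0 < 1 + w" using Pp Pm wdef by simp
  have den: "2 powr (1 - real d) * (1 + q) ^ d = 2 * c^d"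
  proof -
    have "2 powr (1 - real d) = 2 / 2^d" by (simp add: powr_diff powr_realpow)
    moreover have "(1 + q)^d = 2^d * c^d" unfolding c by (simp add: power_divide)
    ultimately show ?thesis by simp
  qed
  have L1: "Lambda (c^d * (Pp + Pm)) / (2 * c^d)
      = (1 + w) * (real d * ln c + ln 2) + (1 + w) * ln (1 + w)"
  proof -
    have "ln (c^d * (Pp + Pm)) = real d * ln c + ln 2 + ln (1 + w)"
    proof -
      have "ln (2 * (1 + w)) = ln 2 + ln (1 + w)" using w1 by (intro ln_mult_pos) auto
      moreover have "ln (c^d * (2 * (1 + w))) = ln (c^d) + ln (2 * (1 + w))"
        using w1 cpos by (intro ln_mult_pos) auto
      moreover have "ln (c^d) = real d * ln c" using cpos by (simp add: ln_realpow)
      ultimately show ?thesis by (simp only: wdef)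
    qed
    then have "Lambda (c^d * (Pp + Pm)) = c^d * (2 * (1 + w)) * (real d * ln c + ln 2 + ln (1 + w))"
      unfolding Lambda_def by (simp only: wdef)
    then show ?thesis using cpos by (simp add: field_simps)
  qed
  have sec: "1 - (1 - q) * (1 + t 0 * t 1) / 2 = c * (1 + v)"
    using fac[of 1 "t 0 * t 1"] unfolding v_def by simp
  have v1: "0 < 1 + v" using v0 unfolding v_def by (simp add: abs_less_iff)
  have L2: "real d * Lambda (c * (1 + v)) / (1 + q)
      = real d / 2 * (1 + v) * ln c + real d / 2 * ((1 + v) * ln (1 + v))"
  proof -
    have "ln (c * (1 + v)) = ln c + ln (1 + v)" using cpos v1 by (intro ln_mult_pos) auto
    then have "Lambda (c * (1 + v)) = c * (1 + v) * (ln c + ln (1 + v))"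
      unfolding Lambda_def by simp
    moreover have "1 + q = 2 * c" using c by simp
    ultimately show ?thesis using cpos by (simp add: field_simps)
  qed
  show ?thesis using L1 L2 S den sec by simp
qed

lemma comp_meas: "i < n \<Longrightarrow> (\<lambda>x. x i) \<in> borel_measurable (PiM {..<n} (\<lambda>_. measure_pmf p))"
  by (rule measurable_component_singleton[THEN measurable_compose[where g="\<lambda>x. x"]]) auto

lemma integrand_meas:
  assumes "2 \<le> n" "d \<le> n"
  shows "(\<lambda>mu. Lambda (\<Sum>\<sigma>\<in>{-1,1::real}. \<Prod>i<d. (1 - (1-exp(-b))*(1+\<sigma>*mu i)/2)) / (2 powr (1 - real d) * (1+exp(-b))^d) - real d * Lambda (1 - (1-exp(-b))*(1+mu 0*mu 1)/2)/(1+exp(-b))) \<in> borel_measurable (PiM {..<n} (\<lambda>_. measure_pmf p))"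
  using assms unfolding Lambda_def
  by (intro borel_measurable_diff borel_measurable_divide borel_measurable_times borel_measurable_sum borel_measurable_prod borel_measurable_const borel_measurable_ln borel_measurable_add comp_meas) auto

lemma integral_as_sum:
  fixes X :: real and n :: nat and g :: "(nat \<Rightarrow> real) \<Rightarrow> real"
  assumes X: "X \<noteq> 0"
    and g: "g \<in> borel_measurable (PiM {..<n} (\<lambda>_. measure_pmf (pmf_of_set {X,-X})))"
  shows "integral\<^sup>L (PiM {..<n} (\<lambda>_. measure_pmf (pmf_of_set {X,-X}))) g
       = (\<Sum>t\<in>PiE {..<n} (\<lambda>_. {X,-X}). g t) / 2^n"
proof -
  define p where "p = pmf_of_set {X,-X}"
  define M where "M = PiM {..<n} (\<lambda>_. measure_pmf p)"
  define T where "T = PiE {..<n} (\<lambda>_. {X,-X})"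
  have setp: "set_pmf p = {X,-X}" unfolding p_def by (simp add: set_pmf_of_set)
  interpret PS: product_sigma_finite "\<lambda>_. measure_pmf p"
    by (simp add: product_sigma_finite_def measure_pmf.sigma_finite_measure_axioms)
  interpret M: prob_space M unfolding M_def
    by (intro prob_space_PiM measure_pmf.prob_space_axioms)
  have finT: "finite T" unfolding T_def by (intro finite_PiE) auto
  have AE1: "AE mu in M. \<forall>i\<in>{..<n}. mu i \<in> {X,-X}"
    unfolding M_def
    by (intro AE_finite_allI AE_PiM_component measure_pmf.prob_space_axioms)
       (auto simp: AE_measure_pmf_iff setp)
  have AE2: "AE mu in M. mu \<in> T"
    using AE1 AE_space
  proof eventually_elim
    case (elim mu) then show ?case
      by (auto simp: M_def T_def space_PiM PiE_iff)
  qed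
  have meas_ind: "(\<lambda>mu. \<Prod>i<n. indicator {t i} (mu i) :: real) \<in> borel_measurable M" for t
    unfolding M_def
    by (intro borel_measurable_prod measurable_compose[OF measurable_component_singleton]) auto
  have eqAE: "AE mu in M. g mu = (\<Sum>t\<in>T. g t * (\<Prod>i<n. indicator {t i} (mu i)))"
    using AE2
  proof eventually_elim
    case (elim mu)
    have "(\<Prod>i<n. indicator {t i} (mu i) :: real) = (if t = mu then 1 else 0)" if "t \<in> T" for t
    proof (cases "t = mu")
      case True then show ?thesis by simp
    next
      case False
      then obtain i where "t i \<noteq> mu i" by auto
      moreover have "i < n" using that elim calculation unfolding T_def
        by (metis PiE_E lessThan_iff)
      ultimately show ?thesis using False
        by (intro prod_zero[THEN trans]) (auto intro!: bexI[of _ i])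
    qed
    then have "(\<Sum>t\<in>T. g t * (\<Prod>i<n. indicator {t i} (mu i))) = (\<Sum>t\<in>T. if t = mu then g t else 0)"
      by (intro sum.cong) auto
    also have "\<dots> = g mu" using elim finT by simp
    finally show ?case by simp
  qed
  have int1: "integral\<^sup>L M (\<lambda>mu. \<Prod>i<n. indicator {t i} (mu i) :: real) = (1/2)^n" if "t \<in> T" for t
  proof -
    have "integral\<^sup>L M (\<lambda>mu. \<Prod>i<n. indicator {t i} (mu i) :: real)
        = (\<Prod>i<n. integral\<^sup>L (measure_pmf p) (indicator {t i}))"
      unfolding M_def
      by (intro PS.product_integral_prod) (auto simp: integrable_measure_pmf_finite setp)
    also have "\<dots> = (\<Prod>i<n. (1/2::real))"
    proof (intro prod.cong refl)
      fix i assume "i \<in> {..<n}"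
      then have "t i \<in> {X,-X}" using that unfolding T_def by auto
      then show "integral\<^sup>L (measure_pmf p) (indicator {t i}) = (1/2::real)"
        unfolding p_def using X by (subst integral_pmf_of_set) (auto simp: indicator_def)
    qed
    finally show ?thesis by simp
  qed
  have "integral\<^sup>L M g = integral\<^sup>L M (\<lambda>mu. \<Sum>t\<in>T. g t * (\<Prod>i<n. indicator {t i} (mu i)))"
    using eqAE g meas_ind unfolding M_def p_def
    by (intro integral_cong_AE) (auto simp: M_def p_def)
  also have "\<dots> = (\<Sum>t\<in>T. integral\<^sup>L M (\<lambda>mu. g t * (\<Prod>i<n. indicator {t i} (mu i))))"
    apply (rule Bochner_Integration.integral_sum[where M=M and I=T and f="\<lambda>t mu. g t * (\<Prod>i<n. indicator {t i} (mu i))"])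
    unfolding M_def
    apply (rule integrable_mult_right)
    apply (rule PS.product_integrable_prod)
    apply simp
    apply (simp add: integrable_measure_pmf_finite setp)
    done
  also have "\<dots> = (\<Sum>t\<in>T. g t * integral\<^sup>L M (\<lambda>mu. \<Prod>i<n. indicator {t i} (mu i)))"
    by (simp only: integral_mult_right_zero)
  also have "\<dots> = (\<Sum>t\<in>T. g t * (1/2)^n)"
    by (intro sum.cong refl) (simp only: int1)
  also have "\<dots> = (\<Sum>t\<in>T. g t) / 2^n"
    by (simp add: sum_divide_distrib power_one_over)
  finally show ?thesis
    unfolding M_def p_def T_def .
qed

theorem proposition2p8:
  fixes d :: nat and \<beta> :: real
  assumes "d \<ge> 3" and "\<beta> > beta_star d"
  shows "\<exists>\<epsilon>>0. \<epsilon> \<le> 1/2 \<and>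
           B_Ising (pi_star \<epsilon>) \<beta> d > ln 2 + real d / 2 * ln ((1 + exp (-\<beta>)) / 2)"
proof -
  have d3: "3 \<le> real d" using assms(1) by simp
  define q where "q = exp (-\<beta>)"
  define s where "s = sqrt (real d - 1)"
  have s2: "s^2 = real d - 1" using d3 unfolding s_def by simp
  have s1: "1 < s" using d3 unfolding s_def by simp
  have rpos: "0 < (s+1)/(s-1)" using s1 by simp
  have r1: "1 < (s+1)/(s-1)" using s1 by simp
  have lnb: "ln ((s+1)/(s-1)) < \<beta>" using assms(2) unfolding beta_star_def s_def .
  then have "exp (ln ((s+1)/(s-1))) < exp \<beta>" by simp
  then have e: "(s+1)/(s-1) < exp \<beta>" using rpos by simp
  have bpos: "0 < \<beta>" using lnb r1 ln_gt_zero[OF r1] by linarith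
  have q0: "0 < q" unfolding q_def by simp
  have q1: "q < 1" unfolding q_def using bpos by simp
  have qe: "q * exp \<beta> = 1" unfolding q_def by (simp add: exp_minus field_simps)
  have "s + 1 < exp \<beta> * (s - 1)" using e s1 by (simp add: pos_divide_less_eq)
  then have "q * (s + 1) < q * (exp \<beta> * (s - 1))" using q0 by simp
  then have qs: "q * (s + 1) < s - 1" using qe by (simp add: mult.assoc[symmetric])
  define \<tau> where "\<tau> = (1-q)/(1+q)"
  define c where "c = (1+q)/2"
  have tau0: "0 < \<tau>" unfolding \<tau>_def using q0 q1 by simp
  have tau1: "\<tau> < 1" unfolding \<tau>_def using q0 q1 by simp
  have ts: "1 < \<tau> * s" unfolding \<tau>_def using qs q0 by (simp add: field_simps)
  define \<kappa> where "\<kappa> = (real d - 1) * \<tau>^2 - 1"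
  have "(real d - 1) * \<tau>^2 = (\<tau> * s)^2" using s2 by (simp add: power_mult_distrib)
  moreover have "1 < (\<tau> * s)^2" using ts by (simp add: one_less_power)
  ultimately have kap: "0 < \<kappa>" unfolding \<kappa>_def by simp
  define X where "X = min (1/(8*real d)) (\<kappa>/(4*(2*real d*(1+\<kappa>)+1)))"
  have "0 < \<kappa>/(4*(2*real d*(1+\<kappa>)+1))" using kap d3 by (intro divide_pos_pos) (auto intro!: add_pos_pos mult_pos_pos)
  then have X0: "0 < X" unfolding X_def using d3 by simp
  have X1: "X \<le> 1/(8*real d)" unfolding X_def by simp
  have X2: "X \<le> \<kappa>/(4*(2*real d*(1+\<kappa>)+1))" unfolding X_def by simp
  have X3: "X \<le> 1/24" using X1 d3 by (smt (verit) frac_le)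
  define \<epsilon> where "\<epsilon> = X/2"
  show ?thesis
  proof (intro exI[of _ \<epsilon>] conjI)
    show "0 < \<epsilon>" using X0 unfolding \<epsilon>_def by simp
    show "\<epsilon> \<le> 1/2" using X3 unfolding \<epsilon>_def by simp
    show "ln 2 + real d / 2 * ln ((1 + exp (-\<beta>)) / 2) < B_Ising (pi_star \<epsilon>) \<beta> d"
    proof -
      define T where "T = PiE {..<d} (\<lambda>_. {X,-X})"
      define F where "F = (\<lambda>mu::nat\<Rightarrow>real. Lambda (\<Sum>\<sigma>\<in>{-1, 1::real}. \<Prod>i<d. (1 - (1 - exp (-\<beta>)) * (1 + \<sigma> * mu i) / 2))
                / (2 powr (1 - real d) * (1 + exp (-\<beta>)) ^ d)
            - real d * Lambda (1 - (1 - exp (-\<beta>)) * (1 + mu 0 * mu 1) / 2) / (1 + exp (-\<beta>)))"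
      have Xn: "X \<noteq> 0" using X0 by simp
      have md: "max d 2 = d" using assms(1) by simp
      have pe: "pi_star \<epsilon> = measure_pmf (pmf_of_set {X, -X})"
        unfolding pi_star_def \<epsilon>_def by simp
      have B: "B_Ising (pi_star \<epsilon>) \<beta> d = (\<Sum>t\<in>T. F t) / 2^d"
      proof -
        have d2: "2 \<le> d" using assms(1) by simp
        show ?thesis
          unfolding B_Ising_def pe md T_def F_def
          by (rule integral_as_sum[OF Xn integrand_meas[where n=d and d=d and b=\<beta> and p="pmf_of_set {X,-X}", OF d2 order.refl]])
      qed
      define y where "y = \<tau> * X"
      define \<nu> where "\<nu> = \<tau> * X^2"
      define \<delta> where "\<delta> = 2 * real d * y"
      define pp where "pp = (\<lambda>t::nat\<Rightarrow>real. \<Prod>i<d. (1 + \<tau> * t i))"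
      define pm where "pm = (\<lambda>t::nat\<Rightarrow>real. \<Prod>i<d. (1 - \<tau> * t i))"
      define w where "w = (\<lambda>t. (pp t + pm t)/2 - 1)"
      define v where "v = (\<lambda>t::nat\<Rightarrow>real. - (\<tau> * (t 0 * t 1)))"
      have y0: "0 \<le> y" using tau0 X0 unfolding y_def by simp
      have yX: "y \<le> X" using tau1 X0 unfolding y_def by simp
      have \<nu>X: "\<nu> \<le> X"
      proof -
        have "X^2 \<le> X" using X0 X3 by (simp add: power2_eq_square mult_le_cancel_right1)
        moreover have "\<tau> * X^2 \<le> X^2" using tau0 tau1 by (intro mult_left_le_one_le) auto
        ultimately show ?thesis unfolding \<nu>_def by simp
      qed
      have \<nu>0: "0 \<le> \<nu>" unfolding \<nu>_def using tau0 by simp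
      have dy: "real d * y \<le> 1/8"
      proof -
        have "real d * y \<le> real d * X" using yX by (intro mult_left_mono) auto
        also have "\<dots> \<le> real d * (1/(8*real d))" using X1 by (intro mult_left_mono) auto
        also have "\<dots> = 1/8" using d3 by simp
        finally show ?thesis .
      qed
      have \<delta>14: "\<delta> \<le> 1/4" unfolding \<delta>_def using dy by simp
      have tT: "t i = X \<or> t i = -X" if "t \<in> T" "i < d" for t i
        using that unfolding T_def by auto
      have absv: "\<bar>v t\<bar> = \<nu>" if "t \<in> T" for t
      proof -
        have "t 0 = X \<or> t 0 = -X" "t 1 = X \<or> t 1 = -X" using tT[OF that] assms(1) by auto
        then have "\<bar>t 0 * t 1\<bar> = X^2" by (auto simp: power2_eq_square abs_mult)
        then show ?thesis unfolding v_def \<nu>_def using tau0 by (simp add: abs_mult)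
      qed
      have fac: "1 + \<tau> * t i = 1 + y \<or> 1 + \<tau> * t i = 1 - y" "1 - \<tau> * t i = 1 + y \<or> 1 - \<tau> * t i = 1 - y"
        if "t \<in> T" "i < d" for t i
        using tT[OF that] unfolding y_def by auto
      have "1 * y \<le> real d * y" using d3 y0 by (intro mult_right_mono) auto
      then have y1: "y \<le> 1/8" using dy by simp
      have bnds: "(1 - y)^d \<le> pp t \<and> pp t \<le> (1 + y)^d \<and> (1 - y)^d \<le> pm t \<and> pm t \<le> (1 + y)^d"
        if "t \<in> T" for t
      proof -
        have a: "(1 - y)^d = (\<Prod>i<d. (1 - y))" "(1 + y)^d = (\<Prod>i<d. (1 + y))" by simp_all
        show ?thesis unfolding pp_def pm_def a
          using fac[OF that] y0 y1 by (intro conjI prod_mono; fastforce)+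
      qed
      have absw: "\<bar>w t\<bar> \<le> \<delta>" if "t \<in> T" for t
      proof -
        have "1 + real d * (-y) \<le> (1 + (-y))^d" using y1 by (intro Bernoulli_inequality) auto
        then have "1 - real d * y \<le> (1 - y)^d" by simp
        moreover have "(1 + y)^d \<le> 1 + 2 * real d * y" using dy y0 by (intro pow_upper) auto
        moreover have "0 \<le> real d * y" using y0 by simp
        moreover have "(1 - y)^d \<le> pp t" "pp t \<le> (1+y)^d" "(1-y)^d \<le> pm t" "pm t \<le> (1+y)^d"
          using bnds[OF that] by auto
        moreover have "1 + 2 * real d * y = 1 + 2 * (real d * y)" by simp
        ultimately have "(pp t + pm t)/2 - 1 \<le> 2 * (real d * y) \<and> 1 - (pp t + pm t)/2 \<le> 2 * (real d * y)"
          by argo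
        then show ?thesis unfolding w_def \<delta>_def by (simp add: abs_le_iff)
      qed
      have \<nu>14: "\<nu> \<le> 1/4" using \<nu>X X3 by simp
      have Fid: "F t = (1 + w t) * (real d * ln c + ln 2) + (1 + w t) * ln (1 + w t)
         - real d / 2 * (1 + v t) * ln c - real d / 2 * ((1 + v t) * ln (1 + v t))" if "t \<in> T" for t
      proof -
        have pos: "\<bar>\<tau> * t i\<bar> < 1" if "i < d" for i
          using tT[OF \<open>t \<in> T\<close> that] y1 y0 unfolding y_def by auto
        have v0: "\<bar>\<tau> * (t 0 * t 1)\<bar> < 1" using absv[OF that] \<nu>14 unfolding v_def by simp
        show ?thesis
          unfolding F_def q_def[symmetric] w_def pp_def pm_def v_def
          by (rule pointwise_identity[OF q0 q1 \<tau>_def c_def pos v0])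
      qed
      define \<alpha> where "\<alpha> = real d * ln c + ln 2 - real d / 2 * ln c - real d / 2 * (\<nu>^2/2 + \<nu>^3)"
      define \<beta>1 where "\<beta>1 = real d * ln c + ln 2 + 1"
      define \<beta>2 where "\<beta>2 = - (real d / 2 * ln c) - real d / 2"
      define \<gamma> where "\<gamma> = 1/2 - \<delta>"
      have FG: "\<alpha> + \<beta>1 * w t + \<beta>2 * v t + \<gamma> * (w t)^2 \<le> F t" if "t \<in> T" for t
      proof -
        have wb: "\<bar>w t\<bar> \<le> 1/4" using absw[OF that] \<delta>14 by simp
        have L: "w t + (w t)^2/2 - \<bar>w t\<bar>^3 \<le> (1 + w t) * ln (1 + w t)"
          by (rule xlnx_lower[OF wb])
        have "\<bar>w t\<bar> * (w t)^2 \<le> \<delta> * (w t)^2" using absw[OF that] by (intro mult_right_mono) auto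
        then have c3: "\<bar>w t\<bar>^3 \<le> \<delta> * (w t)^2" using abs_pow_facts(5)[of "w t"] by simp
        have vb: "\<bar>v t\<bar> \<le> 1/4" using absv[OF that] \<nu>14 by simp
        have U: "(1 + v t) * ln (1 + v t) \<le> v t + (v t)^2/2 + \<bar>v t\<bar>^3"
          by (rule xlnx_upper[OF vb])
        have v2: "(v t)^2 = \<nu>^2" using absv[OF that] by (metis power2_abs)
        have v3: "\<bar>v t\<bar>^3 = \<nu>^3" using absv[OF that] by simp
        have U': "real d / 2 * ((1 + v t) * ln (1 + v t)) \<le> real d / 2 * (v t + \<nu>^2/2 + \<nu>^3)"
          using U v2 v3 by (intro mult_left_mono) auto
        have Geq: "\<alpha> + \<beta>1 * w t + \<beta>2 * v t + \<gamma> * (w t)^2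
            = (1 + w t) * (real d * ln c + ln 2) + (w t + (w t)^2/2 - \<delta> * (w t)^2)
              - real d / 2 * (1 + v t) * ln c - real d / 2 * (v t + \<nu>^2/2 + \<nu>^3)"
          unfolding \<alpha>_def \<beta>1_def \<beta>2_def \<gamma>_def by (simp add: field_simps)
        show ?thesis using Fid[OF that] Geq L c3 U' by linarith
      qed
      have sumG: "(\<Sum>t\<in>T. \<alpha> + \<beta>1 * w t + \<beta>2 * v t + \<gamma> * (w t)^2)
          = real (card T) * \<alpha> + \<beta>1 * (\<Sum>t\<in>T. w t) + \<beta>2 * (\<Sum>t\<in>T. v t) + \<gamma> * (\<Sum>t\<in>T. (w t)^2)"
        by (simp add: sum.distrib sum_distrib_left)
      have cardT: "real (card T) = 2^d" unfolding T_def using card_T[OF Xn, of d] by simp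
      have spp: "(\<Sum>t\<in>T. pp t) = 2^d"
        unfolding pp_def T_def using sum_prod_T[OF Xn, where n=d and f="\<lambda>a. 1 + \<tau> * a"] by simp
      have spm: "(\<Sum>t\<in>T. pm t) = 2^d"
        unfolding pm_def T_def using sum_prod_T[OF Xn, where n=d and f="\<lambda>a. 1 - \<tau> * a"] by simp
      have "(\<Sum>t\<in>T. w t) = ((\<Sum>t\<in>T. pp t) + (\<Sum>t\<in>T. pm t))/2 - real (card T)"
        unfolding w_def by (simp add: sum_subtractf sum.distrib sum_divide_distrib[symmetric])
      then have sw: "(\<Sum>t\<in>T. w t) = 0" using spp spm cardT by simp
      have sv: "(\<Sum>t\<in>T. v t) = 0"
        using sum_m_zero[OF Xn, of d] assms(1) unfolding v_def T_def
        by (simp add: sum_negf sum_distrib_left[symmetric])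
      have w2: "(w t)^2 = ((pp t)^2 + 2 * (pp t * pm t) + (pm t)^2)/4 - (pp t + pm t) + 1" for t
        unfolding w_def by (simp add: field_simps power2_eq_square)
      have "(\<Sum>t\<in>T. (w t)^2) = ((\<Sum>t\<in>T. (pp t)^2) + 2 * (\<Sum>t\<in>T. pp t * pm t) + (\<Sum>t\<in>T. (pm t)^2))/4
           - ((\<Sum>t\<in>T. pp t) + (\<Sum>t\<in>T. pm t)) + real (card T)"
        unfolding w2 by (simp add: sum_subtractf sum.distrib sum_divide_distrib[symmetric] sum_distrib_left[symmetric])
      moreover have "(\<Sum>t\<in>T. (pp t)^2) = 2^d * (1 + y^2)^d"
      proof -
        have "(\<Sum>t\<in>T. (pp t)^2) = (\<Sum>t\<in>T. \<Prod>i<d. (1 + \<tau> * t i)^2)"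
          unfolding pp_def by (simp add: prod_power_distrib)
        also have "\<dots> = ((1 + \<tau> * X)^2 + (1 + \<tau> * (-X))^2)^d"
          unfolding T_def by (rule sum_prod_T[OF Xn])
        also have "(1 + \<tau> * X)^2 + (1 + \<tau> * (-X))^2 = 2 * (1 + y^2)"
          unfolding y_def by (simp add: power2_eq_square algebra_simps)
        finally show ?thesis by (simp only: power_mult_distrib)
      qed
      moreover have "(\<Sum>t\<in>T. (pm t)^2) = 2^d * (1 + y^2)^d"
      proof -
        have "(\<Sum>t\<in>T. (pm t)^2) = (\<Sum>t\<in>T. \<Prod>i<d. (1 - \<tau> * t i)^2)"
          unfolding pm_def by (simp add: prod_power_distrib)
        also have "\<dots> = ((1 - \<tau> * X)^2 + (1 - \<tau> * (-X))^2)^d"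
          unfolding T_def by (rule sum_prod_T[OF Xn])
        also have "(1 - \<tau> * X)^2 + (1 - \<tau> * (-X))^2 = 2 * (1 + y^2)"
          unfolding y_def by (simp add: power2_eq_square algebra_simps)
        finally show ?thesis by (simp only: power_mult_distrib)
      qed
      moreover have "(\<Sum>t\<in>T. pp t * pm t) = 2^d * (1 - y^2)^d"
      proof -
        have "(\<Sum>t\<in>T. pp t * pm t) = (\<Sum>t\<in>T. \<Prod>i<d. (1 + \<tau> * t i) * (1 - \<tau> * t i))"
          unfolding pp_def pm_def by (simp add: prod.distrib)
        also have "\<dots> = ((1 + \<tau> * X) * (1 - \<tau> * X) + (1 + \<tau> * (-X)) * (1 - \<tau> * (-X)))^d"
          unfolding T_def by (rule sum_prod_T[OF Xn])
        also have "(1 + \<tau> * X) * (1 - \<tau> * X) + (1 + \<tau> * (-X)) * (1 - \<tau> * (-X)) = 2 * (1 - y^2)"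
          unfolding y_def by (simp add: power2_eq_square algebra_simps)
        finally show ?thesis by (simp only: power_mult_distrib)
      qed
      ultimately have sE: "(\<Sum>t\<in>T. (w t)^2) = 2^d * (((1 + y^2)^d + (1 - y^2)^d)/2 - 1)"
        using spp spm cardT by (simp add: field_simps)
      have y4: "(y^2)^2 = y^4" by (simp flip: power_mult)
      have "((1 + y^2)^d + (1 - y^2)^d)/2 \<ge> 1 + real d * (real d - 1)/2 * y^4"
        using conjunct1[OF pow_even_lower[of "y^2" d]] y0 unfolding y4 by simp
      then have "real d * (real d - 1) / 2 * y^4 \<le> ((1 + y^2)^d + (1 - y^2)^d)/2 - 1"
        by linarith
      then have sw2: "(\<Sum>t\<in>T. (w t)^2) \<ge> 2^d * (real d * (real d - 1) / 2 * y^4)"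
        unfolding sE by (intro mult_left_mono) auto
      have key: "ln 2 + real d / 2 * ln c < \<alpha> + \<gamma> * (real d * (real d - 1) / 2 * y^4)"
      proof -
        have dt: "(real d - 1) * \<tau>^2 = 1 + \<kappa>" by (simp add: \<kappa>_def)
        have "0 < real d * (1+\<kappa>)" using kap d3 by (intro mult_pos_pos) auto
        then have Dpos: "0 < 4*(2*real d*(1+\<kappa>)+1)" by simp
        have "X * (4*(2*real d*(1+\<kappa>)+1)) \<le> \<kappa>" using X2 Dpos by (simp add: le_divide_eq)
        moreover have "X * (4*(2*real d*(1+\<kappa>)+1)) = 4 * (X * (2*real d*(1+\<kappa>)+1))" by simp
        ultimately have k1: "X * (2*real d*(1+\<kappa>)+1) \<le> \<kappa>/4" by linarith
        have "real d * y \<le> real d * X" using yX by (intro mult_left_mono) auto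
        then have k2: "\<delta> \<le> 2*real d*X" unfolding \<delta>_def by simp
        have k3: "(1/2 - 2*real d*X)*(1+\<kappa>) \<le> \<gamma>*(1+\<kappa>)"
          using k2 kap unfolding \<gamma>_def by (intro mult_right_mono) auto
        have k4: "(1/2 - 2*real d*X)*(1+\<kappa>) = 1/2 + \<kappa>/2 - X * (2*real d*(1+\<kappa>)+1) + X"
          by (simp add: algebra_simps)
        have k5: "1/2 + \<nu> < \<gamma>*(1+\<kappa>)" using k1 k3 k4 kap \<nu>X by linarith
        have \<nu>pos: "0 < \<nu>" unfolding \<nu>_def using tau0 X0 by simp
        have y4: "y^4 = \<tau>^2 * \<nu>^2" unfolding y_def \<nu>_def
          by (simp add: power_mult_distrib power2_eq_square power4_eq_xxxx mult_ac)
        have e1: "\<gamma> * (real d * (real d - 1) / 2 * y^4) = real d / 2 * \<nu>^2 * (\<gamma> * ((real d - 1) * \<tau>^2))"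
          unfolding y4 by (simp add: field_simps)
        have e2: "\<nu>^2/2 + \<nu>^3 = \<nu>^2 * (1/2 + \<nu>)"
          by (simp add: algebra_simps power2_eq_square power3_eq_cube)
        have "real d / 2 * \<nu>^2 * (1/2 + \<nu>) < real d / 2 * \<nu>^2 * (\<gamma> * (1 + \<kappa>))"
          using k5 \<nu>pos d3 by (intro mult_strict_left_mono) auto
        then have "real d / 2 * (\<nu>^2/2 + \<nu>^3) < \<gamma> * (real d * (real d - 1) / 2 * y^4)"
          unfolding e1 e2 dt by (simp add: mult_ac)
        then show ?thesis unfolding \<alpha>_def by linarith
      qed
      have g0: "0 \<le> \<gamma>" unfolding \<gamma>_def using \<delta>14 by simp
      have "2^d * (ln 2 + real d / 2 * ln c) < 2^d * (\<alpha> + \<gamma> * (real d * (real d - 1) / 2 * y^4))"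
        using key by simp
      also have "\<dots> = 2^d * \<alpha> + \<gamma> * (2^d * (real d * (real d - 1) / 2 * y^4))"
        by (simp add: algebra_simps)
      also have "\<dots> \<le> 2^d * \<alpha> + \<gamma> * (\<Sum>t\<in>T. (w t)^2)"
        using sw2 g0 by (intro add_left_mono mult_left_mono) auto
      also have "\<dots> = (\<Sum>t\<in>T. \<alpha> + \<beta>1 * w t + \<beta>2 * v t + \<gamma> * (w t)^2)"
        using sumG cardT sw sv by simp
      also have "\<dots> \<le> (\<Sum>t\<in>T. F t)"
        using FG by (rule sum_mono)
      finally have "ln 2 + real d / 2 * ln c < (\<Sum>t\<in>T. F t) / 2^d"
        by (simp add: field_simps)
      then show ?thesis unfolding B c_def q_def by simp
    qed
  qed
qed

end
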